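(* Let $\Omega\subset\mathbb{R}^N$ be a bounded region with $\partial\Omega\in\mathrm{Lip}(\gamma,M,\delta,s,\{V_j\}_{j=1}^s,\{\lambda_j\}_{j=1}^s)$, and let $T_\varepsilon$, $0<\varepsilon\le\delta/4$, be the maps defined in the context. Then there exist $A_5,\varepsilon_4>0$, depending only on $N,\gamma,M,\delta,s,\{V_j\}_{j=1}^s,\{\lambda_j\}_{j=1}^s$, such that for all $0<\varepsilon\le\varepsilon_4$ $$|\Omega\setminus T_\varepsilon(\Omega)|\le A_5\varepsilon.$$
   Context: A region is an open connected subset of $\mathbb{R}^N$; $|\cdot|$ is Lebesgue measure. For an open set $V$ let $(V)_\delta=\{x\in V:\operatorname{dist}(x,\partial V)>\delta\}$. Hölder class: let $0<\gamma\le1$, $M,\delta>0$, $s\ge1$ an integer, $\{V_j\}_{j=1}^s$ bounded open cuboids and $\{\lambda_j\}_{j=1}^s$ rotations of $\mathbb{R}^N$. A bounded region $\Omega$ satisfies $\partial\Omega\in\mathrm{Lip}(\gamma,M,\delta,s,\{V_j\},\{\lambda_j\})$ if: (i) $\Omega\subset\bigcup_j(V_j)_\delta$ and $(V_j)_\delta\cap\Omega\ne\emptyset$ for each $j$; (ii) for each $j$, $\lambda_j(V_j)=\{x:a_{ij}<x_i<b_{ij},\ i=1,\dots,N\}$ and $\lambda_j(\Omega\cap V_j)=\{x:a_{Nj}<x_N<\varphi_j(\bar x),\ \bar x\in W_j\}$, where $\bar x=(x_1,\dots,x_{N-1})$, $W_j=\{\bar x:a_{ij}<x_i<b_{ij},\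 i=1,\dots,N-1\}$, and $|\varphi_j(\bar x)-\varphi_j(\bar y)|\le M|\bar x-\bar y|^\gamma$ for $\bar x,\bar y\in\overline{W_j}$; (iii) if $V_j\cap\partial\Omega\ne\emptyset$ then $a_{Nj}+\delta\le\varphi_j(\bar x)\le b_{Nj}-\delta$ for $\bar x\in W_j$, while if $V_j\subset\Omega$ then $\varphi_j\equiv b_{Nj}$. The maps $T_\varepsilon$: fix functions $\psi_j\in C^\infty(\mathbb{R}^N)$, $j=1,\dots,s$, with $0\le\psi_j\le1$, $\operatorname{supp}\psi_j\subset(V_j)_{3\delta/4}$, $|\nabla\psi_j|\le b/\delta$ for a fixed constant $b>0$, and $\sum_{j=1}^s\psi_j(x)=1$ for $x\in\Omega$. Let $e_N=(0,\dots,0,1)$ and $\xi_j=\lambda_j^{-1}(e_N)$. For $x\in\mathbb{R}^N$ and $\varepsilon\in(0,\delta/4]$ set $T_\varepsilon(x)=x-\varepsilon\sum_{j=1}^s\xi_j\psi_j(x)$. *)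

theory Defs
  imports "HOL-Analysis.Analysis"
begin

text \<open>Euclidean space R^N is modelled as (real, 'n::{finite,linorder}) vec with a linearly ordered finite index
type 'n; the distinguished N-th (last) coordinate is the greatest index.\<close>

definition lastc :: "'n::{finite,linorder}" where
  "lastc = Max UNIV"

definition eN :: "(real, 'n::{finite,linorder}) vec" where
  "eN = axis lastc 1"

text \<open>x-bar, represented as the vector with last coordinate set to 0
  (isometric copy of R^(N-1)).\<close>
definition proj_bar :: "(real, 'n::{finite,linorder}) vec \<Rightarrow> (real, 'n::{finite,linorder}) vec" where
  "proj_bar x = (\<chi> i. if i = lastc then 0 else x $ i)"

definition Wbox :: "(real, 'n::{finite,linorder}) vec \<Rightarrow> (real, 'n::{finite,linorder}) vec \<Rightarrow> ((real, 'n::{finite,linorder}) vec) set" where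
  "Wbox a b = {x. x $ lastc = 0 \<and> (\<forall>i. i \<noteq> lastc \<longrightarrow> a $ i < x $ i \<and> x $ i < b $ i)}"

definition inner_part :: "('a::metric_space) set \<Rightarrow> real \<Rightarrow> 'a set" where
  "inner_part V d = {x \<in> V. infdist x (frontier V) > d}"

definition rotation :: "((real, 'n::{finite,linorder}) vec \<Rightarrow> (real, 'n::{finite,linorder}) vec) \<Rightarrow> bool" where
  "rotation f \<longleftrightarrow> orthogonal_transformation f \<and> det (matrix f) = 1"

text \<open>C^infinity: all iterated partial derivatives exist, and every one of them
  is (Frechet) differentiable everywhere.\<close>
definition smooth_fun :: "((real, 'n::{finite,linorder}) vec \<Rightarrow> real) \<Rightarrow> bool" where
  "smooth_fun f \<longleftrightarrow> (\<exists>P :: 'n list \<Rightarrow> (real, 'n::{finite,linorder}) vec \<Rightarrow> real. P [] = f \<and>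
     (\<forall>is x. (P is has_derivative (\<lambda>h. \<Sum>i\<in>UNIV. h $ i * P (i # is) x)) (at x)))"

definition lip_boundary ::
  "real \<Rightarrow> real \<Rightarrow> real \<Rightarrow> nat \<Rightarrow> (nat \<Rightarrow> ((real, 'n::{finite,linorder}) vec) set)
   \<Rightarrow> (nat \<Rightarrow> (real, 'n::{finite,linorder}) vec \<Rightarrow> (real, 'n::{finite,linorder}) vec) \<Rightarrow> ((real, 'n::{finite,linorder}) vec) set \<Rightarrow> bool" where
  "lip_boundary \<gamma> M \<delta> s V lam \<Omega> \<longleftrightarrow>
     \<Omega> \<subseteq> (\<Union>j\<in>{1..s}. inner_part (V j) \<delta>) \<and>
     (\<forall>j\<in>{1..s}. inner_part (V j) \<delta> \<inter> \<Omega> \<noteq> {}) \<and>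
     (\<forall>j\<in>{1..s}. \<exists>a b (\<phi> :: (real, 'n::{finite,linorder}) vec \<Rightarrow> real).
        lam j ` V j = box a b \<and>
        lam j ` (\<Omega> \<inter> V j) =
          {x. proj_bar x \<in> Wbox a b \<and> a $ lastc < x $ lastc \<and> x $ lastc < \<phi> (proj_bar x)} \<and>
        (\<forall>x\<in>closure (Wbox a b). \<forall>y\<in>closure (Wbox a b).
            \<bar>\<phi> x - \<phi> y\<bar> \<le> M * norm (x - y) powr \<gamma>) \<and>
        (V j \<inter> frontier \<Omega> \<noteq> {} \<longrightarrow>
            (\<forall>x\<in>Wbox a b. a $ lastc + \<delta> \<le> \<phi> x \<and> \<phi> x \<le> b $ lastc - \<delta>)) \<and>
        (V j \<subseteq> \<Omega> \<longrightarrow> (\<forall>x\<in>Wbox a b. \<phi> x = b $ lastc)))"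

definition T_map :: "nat \<Rightarrow> (nat \<Rightarrow> (real, 'n::{finite,linorder}) vec \<Rightarrow> (real, 'n::{finite,linorder}) vec)
    \<Rightarrow> (nat \<Rightarrow> (real, 'n::{finite,linorder}) vec \<Rightarrow> real) \<Rightarrow> real \<Rightarrow> (real, 'n::{finite,linorder}) vec \<Rightarrow> (real, 'n::{finite,linorder}) vec" where
  "T_map s lam \<psi> \<epsilon> x = x - \<epsilon> *\<^sub>R (\<Sum>j\<in>{1..s}. \<psi> j x *\<^sub>R inv (lam j) eN)"

end

theory Submission
  imports Defs
begin

lemma lastc_eN: "eN $ lastc = 1" "i \<noteq> lastc \<Longrightarrow> eN $ i = 0"
  by (auto simp: eN_def axis_def)

lemma proj_bar_add_eN: "proj_bar (x + t *\<^sub>R eN) = proj_bar x"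
  by (simp add: proj_bar_def vec_eq_iff eN_def axis_def)

lemma chart_lemma:
  fixes lam :: "(real, 'n::{finite,linorder}) vec \<Rightarrow> (real, 'n) vec"
  assumes rot: "rotation lam"
    and hV: "lam ` V = box a b"
    and hO: "lam ` (\<Omega> \<inter> V) = {x. proj_bar x \<in> Wbox a b \<and> a $ lastc < x $ lastc \<and> x $ lastc < \<phi> (proj_bar x)}"
  shows "bounded V" "convex V"
    "\<And>p t. p \<in> V \<Longrightarrow> p \<notin> \<Omega> \<Longrightarrow> 0 \<le> t \<Longrightarrow> p + t *\<^sub>R inv lam eN \<in> V \<Longrightarrow> p + t *\<^sub>R inv lam eN \<notin> \<Omega>"
proof -
  have ot: "orthogonal_transformation lam" using rot by (simp add: rotation_def)
  have lin: "linear lam" using ot orthogonal_transformation_linear by blast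
  have bij: "bij lam" using ot orthogonal_transformation_bij by blast
  have Veq: "V = {y. lam y \<in> box a b}"
  proof
    show "V \<subseteq> {y. lam y \<in> box a b}" using hV by blast
    show "{y. lam y \<in> box a b} \<subseteq> V"
    proof
      fix y assume "y \<in> {y. lam y \<in> box a b}"
      then obtain z where "z \<in> V" "lam z = lam y" using hV by (metis (no_types, lifting) imageE mem_Collect_eq)
      then show "y \<in> V" using bij by (metis bij_def injD)
    qed
  qed
  show "convex V" unfolding Veq
    using convex_linear_vimage[OF lin convex_box(2)] by (simp add: vimage_def)
  obtain B where B: "\<forall>x\<in>box a b. norm x \<le> B" using bounded_box bounded_iff by blast
  show "bounded V" unfolding bounded_iff
    by (rule exI[of _ B]) (use B Veq orthogonal_transformation_norm[OF ot] in auto)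
  fix p t assume p: "p \<in> V" "p \<notin> \<Omega>" "0 \<le> t" "p + t *\<^sub>R inv lam eN \<in> V"
  show "p + t *\<^sub>R inv lam eN \<notin> \<Omega>"
  proof
    assume pin: "p + t *\<^sub>R inv lam eN \<in> \<Omega>"
    have li: "lam (inv lam eN) = eN" using bij by (simp add: bij_is_surj surj_f_inv_f)
    have "lam (p + t *\<^sub>R inv lam eN) = lam p + t *\<^sub>R eN"
      using lin li by (simp add: linear_add linear_scale)
    moreover have "lam (p + t *\<^sub>R inv lam eN) \<in> lam ` (\<Omega> \<inter> V)" using pin p by blast
    ultimately have q: "proj_bar (lam p) \<in> Wbox a b" "lam p $ lastc + t < \<phi> (proj_bar (lam p))"
      using hO by (auto simp: proj_bar_add_eN lastc_eN)
    have "lam p \<in> box a b" using p hV by blast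
    then have "a $ lastc < lam p $ lastc" by (simp add: mem_box_cart)
    with q p(3) have "lam p \<in> lam ` (\<Omega> \<inter> V)" unfolding hO by auto
    then have "p \<in> \<Omega> \<inter> V" using bij by (metis bij_def inj_image_mem_iff)
    with p(2) show False by blast
  qed
qed

lemma up_closure:
  fixes \<xi> :: "nat \<Rightarrow> 'a::real_normed_vector"
  assumes "finite I"
    and cp: "\<And>i p t. i \<in> I \<Longrightarrow> p \<in> V i \<Longrightarrow> p \<notin> \<Omega> \<Longrightarrow> 0 \<le> t \<Longrightarrow> p + t *\<^sub>R \<xi> i \<in> V i \<Longrightarrow> p + t *\<^sub>R \<xi> i \<notin> \<Omega>"
    and nx: "\<And>i. i \<in> I \<Longrightarrow> norm (\<xi> i) = 1"
    and bl: "\<And>i. i \<in> I \<Longrightarrow> ball z r \<subseteq> V i"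
    and c0: "\<And>i. i \<in> I \<Longrightarrow> 0 \<le> c i"
    and cs: "sum c I < r"
    and z: "z \<notin> \<Omega>"
  shows "z + (\<Sum>i\<in>I. c i *\<^sub>R \<xi> i) \<notin> \<Omega>"
  using assms(1) cp nx bl c0 cs
proof (induction I rule: finite_induct)
  case empty
  then show ?case using z by simp
next
  case (insert k F)
  have sF: "sum c F \<le> sum c (insert k F)" using insert by (simp add: insert.prems(4))
  have sFr: "sum c F < r" using sF insert.prems(5) by linarith
  have IH: "z + (\<Sum>i\<in>F. c i *\<^sub>R \<xi> i) \<notin> \<Omega>"
    using insert.prems sFr by (intro insert.IH) auto
  have nF: "norm (\<Sum>i\<in>F. c i *\<^sub>R \<xi> i) \<le> sum c F"
    using insert by (intro order.trans[OF norm_sum] sum_mono) auto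
  have nI: "norm ((\<Sum>i\<in>F. c i *\<^sub>R \<xi> i) + c k *\<^sub>R \<xi> k) \<le> sum c (insert k F)"
  proof -
    have "norm ((\<Sum>i\<in>F. c i *\<^sub>R \<xi> i) + c k *\<^sub>R \<xi> k) \<le> sum c F + c k"
      using nF insert by (intro order.trans[OF norm_triangle_ineq]) auto
    then show ?thesis using insert by simp
  qed
  let ?p = "z + (\<Sum>i\<in>F. c i *\<^sub>R \<xi> i)"
  have p1: "?p \<in> V k" using insert nF sFr by (intro subsetD[OF insert.prems(3)]) (auto simp: dist_norm)
  have nI2: "norm ((\<Sum>i\<in>F. c i *\<^sub>R \<xi> i) + c k *\<^sub>R \<xi> k) < r" using nI insert.prems(5) by linarith
  have "dist z (?p + c k *\<^sub>R \<xi> k) = norm ((\<Sum>i\<in>F. c i *\<^sub>R \<xi> i) + c k *\<^sub>R \<xi> k)"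
  proof -
    have "dist z (?p + c k *\<^sub>R \<xi> k) = norm ((?p + c k *\<^sub>R \<xi> k) - z)"
      by (rule dist_norm[THEN trans], rule norm_minus_commute)
    also have "(?p + c k *\<^sub>R \<xi> k) - z = (\<Sum>i\<in>F. c i *\<^sub>R \<xi> i) + c k *\<^sub>R \<xi> k"
      by (simp add: algebra_simps)
    finally show ?thesis .
  qed
  then have p2: "?p + c k *\<^sub>R \<xi> k \<in> V k" using nI2
    by (intro subsetD[OF insert.prems(3)]) auto
  have "?p + c k *\<^sub>R \<xi> k \<notin> \<Omega>" using insert p1 p2 IH by (intro insert.prems(1)) auto
  then show ?case using insert by (simp add: add.assoc add.commute add.left_commute)
qed

lemma ball_in_inner:
  fixes V :: "'a::real_normed_vector set"
  assumes xV: "x \<in> V" and d: "infdist x (frontier V) > r"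
  shows "ball x r \<subseteq> V"
proof (rule ccontr)
  assume "\<not> ball x r \<subseteq> V"
  then have 1: "ball x r - V \<noteq> {}" by blast
  have r0: "0 < r"
  proof (rule ccontr)
    assume "\<not> 0 < r"
    then have "ball x r = {}" by simp
    with 1 show False by blast
  qed
  have "x \<in> ball x r" using r0 by simp
  then have 2: "ball x r \<inter> V \<noteq> {}" using xV by blast
  obtain f where f: "f \<in> ball x r" "f \<in> frontier V"
    using connected_Int_frontier[OF connected_ball 2 1] by blast
  then have "infdist x (frontier V) \<le> dist x f" by (intro infdist_le)
  also have "dist x f < r" using f(1) by simp
  finally show False using d by simp
qed

lemma swap_measure:
  fixes S :: "'a::euclidean_space set"
  assumes "S \<in> lmeasurable"
  shows "measure lebesgue (S - (+) a ` S) = measure lebesgue ((+) a ` S - S)"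
proof -
  have T: "(+) a ` S \<in> lmeasurable" using assms measurable_translation by blast
  have mT: "measure lebesgue ((+) a ` S) = measure lebesgue S" by (rule measure_translation)
  have i: "S \<inter> (+) a ` S \<in> lmeasurable"
    by (rule fmeasurable_Int_fmeasurable[OF assms fmeasurableD[OF T]])
  have e1: "S - (+) a ` S = S - (S \<inter> (+) a ` S)" by blast
  have e2: "(+) a ` S - S = (+) a ` S - (S \<inter> (+) a ` S)" by blast
  have 1: "measure lebesgue (S - (S \<inter> (+) a ` S)) = measure lebesgue S - measure lebesgue (S \<inter> (+) a ` S)"
    using assms i by (intro measure_Diff) (auto simp: fmeasurable_def)
  have 2: "measure lebesgue ((+) a ` S - (S \<inter> (+) a ` S)) = measure lebesgue ((+) a ` S) - measure lebesgue (S \<inter> (+) a ` S)"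
    using T i by (intro measure_Diff) (auto simp: fmeasurable_def)
  show ?thesis unfolding e1 e2 1 2 mT ..
qed

lemma convex_shift:
  fixes N :: "'a::euclidean_space set"
  assumes cN: "convex N" and oN: "open N" and bN: "bounded N \<or> N = UNIV"
  shows "\<exists>C\<ge>0. \<forall>h. (+) h ` N - N \<in> lmeasurable \<and> measure lebesgue ((+) h ` N - N) \<le> C * norm h"
proof (cases "N = UNIV \<or> N = {}")
  case True
  then have e: "\<And>h. (+) h ` N - N = {}" by auto
  show ?thesis
  proof (intro exI[of _ 0] conjI allI)
    fix h :: 'a
    show "(+) h ` N - N \<in> lmeasurable" unfolding e by simp
    show "measure lebesgue ((+) h ` N - N) \<le> 0 * norm h" unfolding e by simp
  qed simp
next
  case False
  then have bd: "bounded N" and ne: "N \<noteq> {}" using bN by auto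
  obtain c where cN0: "c \<in> N" using ne by blast
  obtain r where r: "r > 0" "ball c r \<subseteq> N" using oN cN0 open_contains_ball by blast
  have Nm: "N \<in> lmeasurable" using bd oN by (rule lmeasurable_open)
  define m where "m = measure lebesgue N"
  have m0: "m \<ge> 0" by (simp add: m_def)
  define d where "d = DIM('a)"
  have d1: "d \<ge> 1" by (simp add: d_def DIM_positive Suc_leI)
  define C where "C = 2 * real d * m / r"
  have C0: "C \<ge> 0" using m0 r by (simp add: C_def)
  show ?thesis
  proof (intro exI[of _ C] conjI allI C0)
    fix h :: 'a
    have Th: "(+) h ` N \<in> lmeasurable" using Nm measurable_translation by blast
    have mTh: "measure lebesgue ((+) h ` N) = m" unfolding m_def by (rule measure_translation)
    show meas: "(+) h ` N - N \<in> lmeasurable" using Th Nm by (intro fmeasurable_Diff) auto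
    show "measure lebesgue ((+) h ` N - N) \<le> C * norm h"
    proof (cases "r \<le> 2 * norm h")
      case True
      have "measure lebesgue ((+) h ` N - N) \<le> m"
        using measure_mono_fmeasurable[of "(+) h ` N - N" "(+) h ` N" lebesgue] Th meas mTh by auto
      also have "m \<le> real d * m" using d1 m0 by (simp add: mult_le_cancel_right1)
      also have "real d * m = C * (r / 2)" using r by (simp add: C_def)
      also have "\<dots> \<le> C * norm h" using True C0 by (intro mult_left_mono) auto
      finally show ?thesis .
    next
      case False
      then have hr: "2 * norm h < r" by simp
      define l where "l = 1 - 2 * norm h / r"
      have l0: "0 < l" "l \<le> 1" using hr r by (auto simp: l_def field_simps)
      define Nl where "Nl = (\<lambda>x. l *\<^sub>R x + (1 - l) *\<^sub>R c) ` N"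
      have Nl_eq: "Nl = (\<lambda>x. (1 - l) *\<^sub>R c + x) ` ((\<lambda>x. l *\<^sub>R x) ` N)"
        unfolding Nl_def image_image by (simp add: add.commute)
      have Nlm: "Nl \<in> lmeasurable"
        unfolding Nl_eq using l0 bd oN
        by (intro lmeasurable_open bounded_translation bounded_scaling open_translation open_scaling) auto
      have mNl: "measure lebesgue Nl = l ^ d * m"
        unfolding Nl_def m_def d_def using measure_lebesgue_affine[of l "(1 - l) *\<^sub>R c" N] l0 by simp
      have sub: "Nl \<subseteq> (+) h ` N"
      proof
        fix y assume "y \<in> Nl"
        then obtain n where n: "n \<in> N" "y = l *\<^sub>R n + (1 - l) *\<^sub>R c" unfolding Nl_def by blast
        show "y \<in> (+) h ` N"
        proof (cases "h = 0")
          case True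
          have "y \<in> N" unfolding n(2) using cN n(1) cN0 l0 by (intro convexD) auto
          then show ?thesis using True by simp
        next
          case False
          have l1: "l < 1" using False r by (simp add: l_def)
          define c' where "c' = c - (1 / (1 - l)) *\<^sub>R h"
          have "1 - l = 2 * norm h / r" by (simp add: l_def)
          have nh: "norm h > 0" using False by simp
          have "norm ((1 / (1 - l)) *\<^sub>R h) = norm h / (1 - l)" using l1 by simp
          also have "\<dots> = r / 2" unfolding \<open>1 - l = 2 * norm h / r\<close> using nh r by (simp add: field_simps)
          finally have "norm ((1 / (1 - l)) *\<^sub>R h) = r / 2" .
          then have "c' \<in> ball c r" using r by (simp add: c'_def dist_norm)
          then have c'N: "c' \<in> N" using r by blast
          have z: "l *\<^sub>R n + (1 - l) *\<^sub>R c' \<in> N" using cN n(1) c'N l0 by (intro convexD) auto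
          have "y = h + (l *\<^sub>R n + (1 - l) *\<^sub>R c')"
            using l1 by (simp add: n(2) c'_def algebra_simps)
          then show ?thesis using z by blast
        qed
      qed
      have "measure lebesgue ((+) h ` N - N) \<le> measure lebesgue ((+) h ` N - Nl)"
      proof (rule measure_mono_fmeasurable)
        show "(+) h ` N - N \<subseteq> (+) h ` N - Nl" using sub unfolding Nl_def
          using cN cN0 l0 by (auto intro!: convexD)
        show "(+) h ` N - N \<in> sets lebesgue" using meas by auto
        show "(+) h ` N - Nl \<in> lmeasurable" using Th Nlm by (intro fmeasurable_Diff) auto
      qed
      also have "measure lebesgue ((+) h ` N - Nl) = m - l ^ d * m"
        using measure_Diff[of lebesgue "(+) h ` N" Nl] Th Nlm sub mTh mNl by (auto simp: fmeasurable_def)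
      also have "\<dots> = m * (1 - l ^ d)" by (simp add: algebra_simps)
      also have "\<dots> \<le> m * (real d * (1 - l))"
      proof (intro mult_left_mono m0)
        have "1 + real d * (- (1 - l)) \<le> (1 + (- (1 - l))) ^ d"
          using l0 by (intro Bernoulli_inequality) auto
        then show "1 - l ^ d \<le> real d * (1 - l)" by (simp add: algebra_simps)
      qed
      also have "\<dots> = C * norm h" using r by (simp add: C_def l_def field_simps)
      finally show ?thesis .
    qed
  qed
qed

lemma NN_convex:
  fixes V :: "nat \<Rightarrow> 'a::real_normed_vector set"
  assumes "\<And>i. i \<in> I \<Longrightarrow> convex (V i)"
  shows "convex {y. \<forall>i\<in>I. \<exists>r>d. ball y r \<subseteq> V i}"
proof (rule convexI)
  fix x y :: 'a and u v :: real
  assume x: "x \<in> {y. \<forall>i\<in>I. \<exists>r>d. ball y r \<subseteq> V i}" and y: "y \<in> {y. \<forall>i\<in>I. \<exists>r>d. ball y r \<subseteq> V i}"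
    and uv: "0 \<le> u" "0 \<le> v" "u + v = 1"
  show "u *\<^sub>R x + v *\<^sub>R y \<in> {y. \<forall>i\<in>I. \<exists>r>d. ball y r \<subseteq> V i}"
  proof (intro CollectI ballI)
    fix i assume i: "i \<in> I"
    obtain r1 where r1: "r1 > d" "ball x r1 \<subseteq> V i" using x i by blast
    obtain r2 where r2: "r2 > d" "ball y r2 \<subseteq> V i" using y i by blast
    have "ball (u *\<^sub>R x + v *\<^sub>R y) (min r1 r2) \<subseteq> V i"
    proof
      fix p assume p: "p \<in> ball (u *\<^sub>R x + v *\<^sub>R y) (min r1 r2)"
      define q where "q = p - (u *\<^sub>R x + v *\<^sub>R y)"
      have nq: "norm q < min r1 r2" using p by (simp add: q_def dist_norm norm_minus_commute)
      have "x + q \<in> V i" using r1 nq by (intro subsetD[OF r1(2)]) (simp add: dist_norm)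
      moreover have "y + q \<in> V i" using r2 nq by (intro subsetD[OF r2(2)]) (simp add: dist_norm)
      ultimately have "u *\<^sub>R (x + q) + v *\<^sub>R (y + q) \<in> V i"
        using assms[OF i] uv by (intro convexD) auto
      moreover have "u *\<^sub>R (x + q) + v *\<^sub>R (y + q) = p"
      proof -
        have "u *\<^sub>R (x + q) + v *\<^sub>R (y + q) = u *\<^sub>R x + v *\<^sub>R y + (u + v) *\<^sub>R q"
          by (simp add: algebra_simps)
        then show ?thesis using uv by (simp add: q_def)
      qed
      ultimately show "p \<in> V i" by simp
    qed
    then show "\<exists>r>d. ball (u *\<^sub>R x + v *\<^sub>R y) r \<subseteq> V i" using r1 r2 by (intro exI[of _ "min r1 r2"]) auto
  qed
qed

lemma NN_open:
  fixes V :: "nat \<Rightarrow> 'a::real_normed_vector set"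
  assumes "finite I"
  shows "open {y. \<forall>i\<in>I. \<exists>r>d. ball y r \<subseteq> V i}"
proof -
  have eq: "{y. \<forall>i\<in>I. \<exists>r>d. ball y r \<subseteq> V i} = (\<Inter>i\<in>I. {y. \<exists>r>d. ball y r \<subseteq> V i})" by blast
  have "open {y. \<exists>r>d. ball y r \<subseteq> V i}" for i
  proof (rule openI)
    fix y assume "y \<in> {y. \<exists>r>d. ball y r \<subseteq> V i}"
    then obtain r where r: "r > d" "ball y r \<subseteq> V i" by blast
    have "ball y (r - d) \<subseteq> {y. \<exists>r>d. ball y r \<subseteq> V i}"
    proof
      fix z assume z: "z \<in> ball y (r - d)"
      have "ball z (r - dist y z) \<subseteq> ball y r"
      proof
        fix p assume "p \<in> ball z (r - dist y z)"
        then have "dist z p < r - dist y z" by simp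
        moreover have "dist y p \<le> dist y z + dist z p" by (rule dist_triangle)
        ultimately show "p \<in> ball y r" by simp
      qed
      moreover have "r - dist y z > d" using z by simp
      ultimately show "z \<in> {y. \<exists>r>d. ball y r \<subseteq> V i}" using r by blast
    qed
    then show "\<exists>e>0. ball y e \<subseteq> {y. \<exists>r>d. ball y r \<subseteq> V i}" using r by (intro exI[of _ "r - d"]) auto
  qed
  then show ?thesis unfolding eq using assms by blast
qed

theorem lemma19:
  fixes \<gamma> M \<delta> bc :: real and s :: nat
    and V :: "nat \<Rightarrow> ((real, 'n::{finite,wellorder}) vec) set"
    and lam :: "nat \<Rightarrow> (real, 'n::{finite,wellorder}) vec \<Rightarrow> (real, 'n::{finite,wellorder}) vec"
  assumes "0 < \<gamma>" "\<gamma> \<le> 1" "0 < M" "0 < \<delta>" "1 \<le> s" "0 < bc"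
    and "\<forall>j\<in>{1..s}. rotation (lam j)"
  shows "\<exists>A5 \<epsilon>4. A5 > 0 \<and> \<epsilon>4 > 0 \<and> \<epsilon>4 \<le> \<delta> / 4 \<and>
    (\<forall>\<Omega> \<psi>.
       open \<Omega> \<and> connected \<Omega> \<and> bounded \<Omega> \<and> \<Omega> \<noteq> {} \<and>
       lip_boundary \<gamma> M \<delta> s V lam \<Omega> \<and>
       (\<forall>j\<in>{1..s}. smooth_fun (\<psi> j) \<and> (\<forall>x. 0 \<le> \<psi> j x \<and> \<psi> j x \<le> 1) \<and>
           closure {x. \<psi> j x \<noteq> 0} \<subseteq> inner_part (V j) (3 * \<delta> / 4) \<and>
           (\<forall>x D. (\<psi> j has_derivative D) (at x) \<longrightarrow> onorm D \<le> bc / \<delta>)) \<and>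
       (\<forall>x\<in>\<Omega>. (\<Sum>j\<in>{1..s}. \<psi> j x) = 1)
     \<longrightarrow> (\<forall>\<epsilon>. 0 < \<epsilon> \<and> \<epsilon> \<le> \<epsilon>4 \<longrightarrow>
            \<Omega> - T_map s lam \<psi> \<epsilon> ` \<Omega> \<in> sets lebesgue \<and>
            emeasure lebesgue (\<Omega> - T_map s lam \<psi> \<epsilon> ` \<Omega>) \<le> ennreal (A5 * \<epsilon>)))"
proof -
  have d0: "0 < \<delta>" and s1: "1 \<le> s" and bc0: "0 < bc" using assms by auto
  have rot: "\<And>j. j \<in> {1..s} \<Longrightarrow> rotation (lam j)" using assms(7) by blast
  define \<xi> where "\<xi> j = inv (lam j) eN" for j
  define NN where "NN I = {y. \<forall>i\<in>I. \<exists>r>\<delta>/2. ball y r \<subseteq> V i}" for I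
  define CP where "CP I C \<longleftrightarrow> C \<ge> 0 \<and> (\<forall>h. (+) h ` NN I - NN I \<in> lmeasurable \<and>
      measure lebesgue ((+) h ` NN I - NN I) \<le> C * norm h)" for I C
  define CC where "CC I = (SOME C. CP I C)" for I
  define A5 where "A5 = 1 + real s * (\<Sum>I\<in>Pow {1..s}. max 0 (CC I))"
  define e4 where "e4 = min (\<delta> / (8 * real s)) (\<delta> / (2 * real s * bc))"
  have rs: "real s \<ge> 1" using s1 by simp
  have A5pos: "A5 > 0"
  proof -
    have "0 \<le> (\<Sum>I\<in>Pow {1..s}. max 0 (CC I))" by (intro sum_nonneg) auto
    then show ?thesis unfolding A5_def using rs by (simp add: add_pos_nonneg)
  qed
  have e4pos: "e4 > 0" unfolding e4_def using d0 rs bc0 by simp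
  have e4le: "e4 \<le> \<delta> / 4"
  proof -
    have "\<delta> / (8 * real s) \<le> \<delta> / 4" using d0 rs by (intro divide_left_mono) auto
    then show ?thesis unfolding e4_def by linarith
  qed
  show ?thesis
  proof (rule exI[of _ A5], rule exI[of _ e4], intro conjI allI impI A5pos e4pos e4le)
    fix \<Omega> :: "(real, 'n) vec set" and \<psi> :: "nat \<Rightarrow> (real, 'n) vec \<Rightarrow> real"
    assume H: "open \<Omega> \<and> connected \<Omega> \<and> bounded \<Omega> \<and> \<Omega> \<noteq> {} \<and>
       lip_boundary \<gamma> M \<delta> s V lam \<Omega> \<and>
       (\<forall>j\<in>{1..s}. smooth_fun (\<psi> j) \<and> (\<forall>x. 0 \<le> \<psi> j x \<and> \<psi> j x \<le> 1) \<and>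
           closure {x. \<psi> j x \<noteq> 0} \<subseteq> inner_part (V j) (3 * \<delta> / 4) \<and>
           (\<forall>x D. (\<psi> j has_derivative D) (at x) \<longrightarrow> onorm D \<le> bc / \<delta>)) \<and>
       (\<forall>x\<in>\<Omega>. (\<Sum>j\<in>{1..s}. \<psi> j x) = 1)"
    fix \<epsilon> :: real assume E: "0 < \<epsilon> \<and> \<epsilon> \<le> e4"
    have oO: "open \<Omega>" and bO: "bounded \<Omega>" and lb: "lip_boundary \<gamma> M \<delta> s V lam \<Omega>" using H by auto
    have psi: "\<And>j. j \<in> {1..s} \<Longrightarrow> smooth_fun (\<psi> j) \<and> (\<forall>x. 0 \<le> \<psi> j x \<and> \<psi> j x \<le> 1) \<and>
           closure {x. \<psi> j x \<noteq> 0} \<subseteq> inner_part (V j) (3 * \<delta> / 4) \<and>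
           (\<forall>x D. (\<psi> j has_derivative D) (at x) \<longrightarrow> onorm D \<le> bc / \<delta>)" using H by blast
    have e0: "0 < \<epsilon>" using E by simp
    have es: "\<epsilon> * real s \<le> \<delta> / 8"
    proof -
      have "\<epsilon> \<le> \<delta> / (8 * real s)" using E unfolding e4_def by simp
      then show ?thesis using rs by (simp add: field_simps)
    qed
    have ebc: "\<epsilon> * real s * (bc / \<delta>) \<le> 1 / 2"
    proof -
      have "\<epsilon> \<le> \<delta> / (2 * real s * bc)" using E unfolding e4_def by simp
      then show ?thesis using rs d0 bc0 by (simp add: field_simps)
    qed
    have ch: "bounded (V j) \<and> convex (V j) \<and> (\<forall>p t. p \<in> V j \<longrightarrow> p \<notin> \<Omega> \<longrightarrow> 0 \<le> t \<longrightarrow>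
         p + t *\<^sub>R \<xi> j \<in> V j \<longrightarrow> p + t *\<^sub>R \<xi> j \<notin> \<Omega>)" if j: "j \<in> {1..s}" for j
    proof -
      obtain a b \<phi> where ab: "lam j ` V j = box a b"
        "lam j ` (\<Omega> \<inter> V j) = {x. proj_bar x \<in> Wbox a b \<and> a $ lastc < x $ lastc \<and> x $ lastc < \<phi> (proj_bar x)}"
        using lb j unfolding lip_boundary_def by blast
      show ?thesis using chart_lemma[OF rot[OF j] ab] unfolding \<xi>_def by blast
    qed
    have nxi: "norm (\<xi> j) = 1" if j: "j \<in> {1..s}" for j
    proof -
      have ot: "orthogonal_transformation (lam j)" using rot[OF j] by (simp add: rotation_def)
      have eq: "lam j (\<xi> j) = eN" unfolding \<xi>_def
        using orthogonal_transformation_surj[OF ot] by (simp add: surj_f_inv_f)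
      have "norm (\<xi> j) = norm (lam j (\<xi> j))" using orthogonal_transformation_norm[OF ot, of "\<xi> j"] by (rule sym)
      also have "\<dots> = norm (eN :: (real, 'n) vec)" by (simp only: eq)
      finally have "norm (\<xi> j) = norm (eN :: (real, 'n) vec)" .
      then show ?thesis by (simp add: eN_def)
    qed
    have cpI: "p + t *\<^sub>R \<xi> i \<notin> \<Omega>"
      if "I \<subseteq> {1..s}" "i \<in> I" "p \<in> V i" "p \<notin> \<Omega>" "0 \<le> t" "p + t *\<^sub>R \<xi> i \<in> V i" for I i p t
    proof -
      have "i \<in> {1..s}" using that(1,2) by blast
      then show ?thesis using ch that(3-6) by blast
    qed
    have CCprop: "CP I (CC I)" if I: "I \<subseteq> {1..s}" for I
    proof -
      have fI: "finite I" using I finite_subset by blast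
      have "convex (NN I)" unfolding NN_def using ch I by (intro NN_convex) auto
      moreover have "open (NN I)" unfolding NN_def using fI by (rule NN_open)
      moreover have "bounded (NN I) \<or> NN I = UNIV"
      proof (cases "I = {}")
        case True then show ?thesis by (simp add: NN_def)
      next
        case False
        then obtain i where i: "i \<in> I" by blast
        have "NN I \<subseteq> V i"
        proof
          fix y assume "y \<in> NN I"
          then obtain r where "r > \<delta>/2" "ball y r \<subseteq> V i" using i unfolding NN_def by blast
          moreover from this(1) have "y \<in> ball y r" using d0 by simp
          ultimately show "y \<in> V i" by blast
        qed
        then show ?thesis using ch i I bounded_subset by blast
      qed
      ultimately have "\<exists>C. CP I C" unfolding CP_def by (intro convex_shift)
      then show ?thesis unfolding CC_def by (rule someI_ex)
    qed
    have lip: "\<bar>\<psi> j x - \<psi> j y\<bar> \<le> bc / \<delta> * norm (x - y)" if j: "j \<in> {1..s}" for j x y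
    proof -
      obtain P :: "'n list \<Rightarrow> (real, 'n) vec \<Rightarrow> real" where P: "P [] = \<psi> j"
        "\<forall>is x. (P is has_derivative (\<lambda>h. \<Sum>i\<in>UNIV. h $ i * P (i # is) x)) (at x)"
        using psi[OF j] unfolding smooth_fun_def by blast
      have der: "\<And>x. (\<psi> j has_derivative (\<lambda>h. \<Sum>i\<in>UNIV. h $ i * P [i] x)) (at x)"
      proof -
        fix x
        have "(P [] has_derivative (\<lambda>h. \<Sum>i\<in>UNIV. h $ i * P [i] x)) (at x)" using P(2) by blast
        then show "(\<psi> j has_derivative (\<lambda>h. \<Sum>i\<in>UNIV. h $ i * P [i] x)) (at x)" unfolding P(1) .
      qed
      have bd: "\<And>x. onorm (\<lambda>h. \<Sum>i\<in>UNIV. h $ i * P [i] x) \<le> bc / \<delta>" using psi[OF j] der by blast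
      have "norm (\<psi> j x - \<psi> j y) \<le> bc / \<delta> * norm (x - y)"
        by (rule differentiable_bound[OF convex_UNIV _ _ UNIV_I UNIV_I, where f' = "\<lambda>x h. \<Sum>i\<in>UNIV. h $ i * P [i] x"])
           (use der bd in auto)
      then show ?thesis by simp
    qed
    have dpsi: "\<psi> j differentiable (at x)" if j: "j \<in> {1..s}" for j x
    proof -
      obtain P :: "'n list \<Rightarrow> (real, 'n) vec \<Rightarrow> real" where P: "P [] = \<psi> j"
        "\<forall>is x. (P is has_derivative (\<lambda>h. \<Sum>i\<in>UNIV. h $ i * P (i # is) x)) (at x)"
        using psi[OF j] unfolding smooth_fun_def by blast
      have "(P [] has_derivative (\<lambda>h. \<Sum>i\<in>UNIV. h $ i * P [i] x)) (at x)" using P(2) by blast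
      then show ?thesis unfolding differentiable_def P(1) by blast
    qed
    define v where "v x = (\<Sum>j\<in>{1..s}. \<psi> j x *\<^sub>R \<xi> j)" for x
    have Teq: "T_map s lam \<psi> \<epsilon> x = x - \<epsilon> *\<^sub>R v x" for x
      unfolding T_map_def v_def \<xi>_def by simp
    have vlip: "norm (v x - v y) \<le> real s * (bc / \<delta>) * norm (x - y)" for x y
    proof -
      have "v x - v y = (\<Sum>j\<in>{1..s}. (\<psi> j x - \<psi> j y) *\<^sub>R \<xi> j)"
        unfolding v_def by (simp add: sum_subtractf scaleR_diff_left)
      also have "norm \<dots> \<le> (\<Sum>j\<in>{1..s}. norm ((\<psi> j x - \<psi> j y) *\<^sub>R \<xi> j))" by (rule norm_sum)
      also have "\<dots> \<le> (\<Sum>j\<in>{1..s}. bc / \<delta> * norm (x - y))"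
      proof (rule sum_mono)
        fix j assume j: "j \<in> {1..s}"
        have "norm ((\<psi> j x - \<psi> j y) *\<^sub>R \<xi> j) = \<bar>\<psi> j x - \<psi> j y\<bar>" by (simp add: nxi[OF j])
        then show "norm ((\<psi> j x - \<psi> j y) *\<^sub>R \<xi> j) \<le> bc / \<delta> * norm (x - y)" using lip[OF j, of x y] by linarith
      qed
      also have "\<dots> = real s * (bc / \<delta>) * norm (x - y)" by simp
      finally show ?thesis .
    qed
    have vnorm: "norm (v x) \<le> real s" for x
    proof -
      have "norm (v x) \<le> (\<Sum>j\<in>{1..s}. norm (\<psi> j x *\<^sub>R \<xi> j))" unfolding v_def by (rule norm_sum)
      also have "\<dots> \<le> (\<Sum>j\<in>{1..s}. 1)"
      proof (rule sum_mono)
        fix j assume j: "j \<in> {1..s}"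
        have "0 \<le> \<psi> j x" "\<psi> j x \<le> 1" using psi[OF j] by auto
        then show "norm (\<psi> j x *\<^sub>R \<xi> j) \<le> 1" by (simp add: nxi[OF j])
      qed
      finally show ?thesis by simp
    qed
    define D where "D I = \<Omega> \<inter> NN I" for I
    define w where "w I = (\<Sum>i\<in>I. \<xi> i)" for I
    have nw: "norm (w I) \<le> real s" if I: "I \<subseteq> {1..s}" for I
    proof -
      have fI: "finite I" using I finite_subset by blast
      have "norm (w I) \<le> (\<Sum>i\<in>I. norm (\<xi> i))" unfolding w_def by (rule norm_sum)
      also have "\<dots> = (\<Sum>i\<in>I. 1)" using I nxi by (intro sum.cong) auto
      also have "\<dots> = real (card I)" by simp
      also have "\<dots> \<le> real s" using card_mono[OF _ I] by simp
      finally show ?thesis .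
    qed
    have cardI: "real (card I) \<le> real s" if I: "I \<subseteq> {1..s}" for I
      using card_mono[OF _ I] by simp
    have cover: "\<Omega> - T_map s lam \<psi> \<epsilon> ` \<Omega> \<subseteq> (\<Union>I\<in>Pow {1..s}. D I - (+) (- (\<epsilon> *\<^sub>R w I)) ` D I)"
    proof
      fix y assume y: "y \<in> \<Omega> - T_map s lam \<psi> \<epsilon> ` \<Omega>"
      define F where "F z = y + \<epsilon> *\<^sub>R v z" for z
      have "\<exists>!x. F x = x"
      proof (rule banach_fix_type[of "1/2"])
        show "\<forall>x z. dist (F x) (F z) \<le> 1 / 2 * dist x z"
        proof (intro allI)
          fix x z
          have "F x - F z = \<epsilon> *\<^sub>R (v x - v z)" by (simp add: F_def scaleR_diff_right)
          then have "dist (F x) (F z) = \<epsilon> * norm (v x - v z)"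
            using e0 by (simp add: dist_norm)
          also have "\<dots> \<le> \<epsilon> * (real s * (bc / \<delta>) * norm (x - z))"
            using e0 vlip by (intro mult_left_mono) auto
          also have "\<dots> = (\<epsilon> * real s * (bc / \<delta>)) * dist x z" by (simp add: dist_norm)
          also have "\<dots> \<le> 1 / 2 * dist x z" using ebc by (intro mult_right_mono) auto
          finally show "dist (F x) (F z) \<le> 1 / 2 * dist x z" .
        qed
      qed auto
      then obtain x where xF: "F x = x" by blast
      define u where "u = v x"
      have xy: "x = y + \<epsilon> *\<^sub>R u" using xF unfolding F_def u_def by simp
      have Tx: "T_map s lam \<psi> \<epsilon> x = y" unfolding Teq u_def[symmetric] using xy by simp
      have xO: "x \<notin> \<Omega>"
      proof
        assume "x \<in> \<Omega>"
        then have "T_map s lam \<psi> \<epsilon> x \<in> T_map s lam \<psi> \<epsilon> ` \<Omega>" by (rule imageI)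
        with Tx y show False by simp
      qed
      define I where "I = {i \<in> {1..s}. \<psi> i x \<noteq> 0}"
      have I: "I \<subseteq> {1..s}" "finite I" unfolding I_def by auto
      have ballx: "ball x (3 * \<delta> / 4) \<subseteq> V i" if i: "i \<in> I" for i
      proof -
        have i1: "i \<in> {1..s}" and ne: "\<psi> i x \<noteq> 0" using i unfolding I_def by auto
        have "x \<in> {x. \<psi> i x \<noteq> 0}" using ne by simp
        then have "x \<in> closure {x. \<psi> i x \<noteq> 0}" by (rule subsetD[OF closure_subset])
        moreover have "closure {x. \<psi> i x \<noteq> 0} \<subseteq> inner_part (V i) (3 * \<delta> / 4)"
          using psi[OF i1] by (elim conjE)
        ultimately have "x \<in> inner_part (V i) (3 * \<delta> / 4)" by (rule subsetD[rotated])
        then have "x \<in> V i" "infdist x (frontier (V i)) > 3 * \<delta> / 4" unfolding inner_part_def by auto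
        then show ?thesis by (rule ball_in_inner)
      qed
      have vx: "u = (\<Sum>i\<in>I. \<psi> i x *\<^sub>R \<xi> i)"
        unfolding u_def v_def I_def by (rule sum.mono_neutral_right) auto
      have nxy: "norm (x - y) \<le> \<delta> / 8"
      proof -
        have "x - y = \<epsilon> *\<^sub>R u" using xy by (simp add: algebra_simps)
        then have "norm (x - y) = \<epsilon> * norm u" using e0 by simp
        also have "\<dots> \<le> \<epsilon> * real s" using e0 vnorm unfolding u_def by (intro mult_left_mono) auto
        finally show ?thesis using es by simp
      qed
      have yNN: "y \<in> NN I" unfolding NN_def
      proof (intro CollectI ballI exI conjI)
        fix i assume i: "i \<in> I"
        show "\<delta> / 2 < 5 * \<delta> / 8" using d0 by simp
        show "ball y (5 * \<delta> / 8) \<subseteq> V i"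
        proof
          fix p assume "p \<in> ball y (5 * \<delta> / 8)"
          then have "dist y p < 5 * \<delta> / 8" by simp
          moreover have "dist x p \<le> dist x y + dist y p" by (rule dist_triangle)
          moreover have "dist x y \<le> \<delta> / 8" using nxy by (simp add: dist_norm)
          ultimately have "p \<in> ball x (3 * \<delta> / 4)" by simp
          then show "p \<in> V i" using ballx[OF i] by blast
        qed
      qed
      define c where "c i = \<epsilon> * (1 - \<psi> i x)" for i
      have psix: "0 \<le> \<psi> i x \<and> \<psi> i x \<le> 1" if "i \<in> I" for i
      proof -
        have "i \<in> {1..s}" using that unfolding I_def by blast
        then show ?thesis using psi by blast
      qed
      have c0: "0 \<le> c i" if "i \<in> I" for i using psix[OF that] e0 unfolding c_def by simp
      have csum: "sum c I < 3 * \<delta> / 4"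
      proof -
        have "sum c I \<le> (\<Sum>i\<in>I. \<epsilon>)"
          by (intro sum_mono) (use psix e0 in \<open>auto simp: c_def\<close>)
        also have "\<dots> = \<epsilon> * real (card I)" by simp
        also have "\<dots> \<le> \<epsilon> * real s" using cardI[OF I(1)] e0 by (intro mult_left_mono) auto
        finally show ?thesis using es d0 by simp
      qed
      have up: "x + (\<Sum>i\<in>I. c i *\<^sub>R \<xi> i) \<notin> \<Omega>"
        by (rule up_closure[where V = V, OF I(2) cpI[OF I(1)] nxi _ c0 csum xO])
           (use I ballx in auto)
      have "x + (\<Sum>i\<in>I. c i *\<^sub>R \<xi> i) = y + \<epsilon> *\<^sub>R w I"
      proof -
        have "x + (\<Sum>i\<in>I. c i *\<^sub>R \<xi> i) = y + ((\<Sum>i\<in>I. (\<epsilon> * \<psi> i x) *\<^sub>R \<xi> i) + (\<Sum>i\<in>I. c i *\<^sub>R \<xi> i))"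
          by (subst xy) (simp add: vx scaleR_sum_right add.assoc)
        also have "(\<Sum>i\<in>I. (\<epsilon> * \<psi> i x) *\<^sub>R \<xi> i) + (\<Sum>i\<in>I. c i *\<^sub>R \<xi> i) = (\<Sum>i\<in>I. \<epsilon> *\<^sub>R \<xi> i)"
          unfolding sum.distrib[symmetric] by (intro sum.cong) (auto simp: c_def algebra_simps)
        also have "\<dots> = \<epsilon> *\<^sub>R w I" by (simp add: w_def scaleR_sum_right)
        finally show ?thesis .
      qed
      with up have yw: "y + \<epsilon> *\<^sub>R w I \<notin> \<Omega>" by simp
      have "y \<in> D I - (+) (- (\<epsilon> *\<^sub>R w I)) ` D I"
      proof
        show "y \<in> D I" using y yNN by (simp add: D_def)
        show "y \<notin> (+) (- (\<epsilon> *\<^sub>R w I)) ` D I"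
        proof
          assume "y \<in> (+) (- (\<epsilon> *\<^sub>R w I)) ` D I"
          then obtain d where "d \<in> D I" "y = - (\<epsilon> *\<^sub>R w I) + d" by blast
          then have "y + \<epsilon> *\<^sub>R w I \<in> \<Omega>" by (simp add: D_def)
          with yw show False by simp
        qed
      qed
      then show "y \<in> (\<Union>I\<in>Pow {1..s}. D I - (+) (- (\<epsilon> *\<^sub>R w I)) ` D I)" using I by blast
    qed
    have Olm: "\<Omega> \<in> lmeasurable" using bO oO by (rule lmeasurable_open)
    have Tfun: "T_map s lam \<psi> \<epsilon> = (\<lambda>x. x - \<epsilon> *\<^sub>R v x)" by (rule ext) (rule Teq)
    have vdiff: "v differentiable (at x)" for x
      unfolding v_def[abs_def]
    proof (rule differentiable_sum)
      show "finite {1..s}" by simp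
      show "\<forall>j\<in>{1..s}. (\<lambda>x. \<psi> j x *\<^sub>R \<xi> j) differentiable at x"
        using dpsi by (auto intro!: differentiable_scaleR differentiable_const)
    qed
    have Tdiff: "T_map s lam \<psi> \<epsilon> differentiable_on \<Omega>"
      unfolding Tfun using vdiff
      by (intro differentiable_at_imp_differentiable_on) (auto intro!: differentiable_diff differentiable_scaleR differentiable_ident differentiable_const)
    have TOm: "T_map s lam \<psi> \<epsilon> ` \<Omega> \<in> sets lebesgue"
      by (rule differentiable_image_in_sets_lebesgue[OF fmeasurableD[OF Olm] _ Tdiff]) simp
    have meas: "\<Omega> - T_map s lam \<psi> \<epsilon> ` \<Omega> \<in> sets lebesgue"
      using fmeasurableD[OF Olm] TOm by (rule sets.Diff)
    show "\<Omega> - T_map s lam \<psi> \<epsilon> ` \<Omega> \<in> sets lebesgue" by (rule meas)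
    have piece: "D I - (+) (- (\<epsilon> *\<^sub>R w I)) ` D I \<in> sets lebesgue \<and>
        measure lebesgue (D I - (+) (- (\<epsilon> *\<^sub>R w I)) ` D I) \<le> max 0 (CC I) * (\<epsilon> * real s)"
      if I: "I \<subseteq> {1..s}" for I
    proof -
      define h where "h = \<epsilon> *\<^sub>R w I"
      have fI: "finite I" using I finite_subset by blast
      have NNo: "open (NN I)" unfolding NN_def by (rule NN_open[OF fI])
      have Dlm: "D I \<in> lmeasurable" unfolding D_def
        by (rule lmeasurable_open) (use bO oO NNo in \<open>auto intro: bounded_Int\<close>)
      have Dtr: "(+) (- h) ` D I \<in> lmeasurable" using Dlm by (rule measurable_translation)
      have swap: "measure lebesgue (D I - (+) (- h) ` D I) = measure lebesgue ((+) (- h) ` D I - D I)"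
        by (rule swap_measure[OF Dlm])
      have sub: "(+) (- h) ` D I - D I \<subseteq> (+) (- h) ` NN I - NN I"
      proof
        fix z assume z: "z \<in> (+) (- h) ` D I - D I"
        then obtain d where d: "d \<in> D I" "z = - h + d" by blast
        have zNN: "z \<notin> NN I"
        proof
          assume zN: "z \<in> NN I"
          then have zO: "z \<notin> \<Omega>" using z by (simp add: D_def)
          have bz: "ball z (\<delta> / 2) \<subseteq> V i" if i: "i \<in> I" for i
          proof -
            obtain r where r: "r > \<delta> / 2" "ball z r \<subseteq> V i" using zN i unfolding NN_def by blast
            have "ball z (\<delta> / 2) \<subseteq> ball z r" using r(1) by (intro subset_ball) simp
            then show ?thesis using r(2) by (rule order_trans)
          qed
          have cs: "sum (\<lambda>i. \<epsilon>) I < \<delta> / 2"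
          proof -
            have "sum (\<lambda>i. \<epsilon>) I = \<epsilon> * real (card I)" by simp
            also have "\<dots> \<le> \<epsilon> * real s" using cardI[OF I] e0 by (intro mult_left_mono) auto
            finally show ?thesis using es d0 by simp
          qed
          have "z + (\<Sum>i\<in>I. \<epsilon> *\<^sub>R \<xi> i) \<notin> \<Omega>"
            by (rule up_closure[where V = V and c = "\<lambda>i. \<epsilon>", OF fI cpI[OF I] nxi bz _ cs zO])
               (use I e0 in auto)
          moreover have "z + (\<Sum>i\<in>I. \<epsilon> *\<^sub>R \<xi> i) = d"
            using d(2) by (simp add: h_def w_def scaleR_sum_right)
          moreover have "d \<in> \<Omega>" using d(1) by (simp add: D_def)
          ultimately show False by simp
        qed
        have "d \<in> NN I" using d(1) by (simp add: D_def)
        then show "z \<in> (+) (- h) ` NN I - NN I" using d zNN by blast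
      qed
      have CPI: "CP I (CC I)" by (rule CCprop[OF I])
      then have C0: "CC I \<ge> 0" and NNm: "(+) (- h) ` NN I - NN I \<in> lmeasurable"
        and NNb: "measure lebesgue ((+) (- h) ` NN I - NN I) \<le> CC I * norm (- h)"
        unfolding CP_def by blast+
      have "measure lebesgue (D I - (+) (- h) ` D I) = measure lebesgue ((+) (- h) ` D I - D I)" by (rule swap)
      also have "\<dots> \<le> measure lebesgue ((+) (- h) ` NN I - NN I)"
        by (rule measure_mono_fmeasurable[OF sub _ NNm]) (use Dtr Dlm in auto)
      also have "\<dots> \<le> CC I * norm (- h)" by (rule NNb)
      also have "\<dots> \<le> CC I * (\<epsilon> * real s)"
      proof (rule mult_left_mono[OF _ C0])
        have "norm (- h) = \<epsilon> * norm (w I)" using e0 by (simp add: h_def)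
        also have "\<dots> \<le> \<epsilon> * real s" using nw[OF I] e0 by (intro mult_left_mono) auto
        finally show "norm (- h) \<le> \<epsilon> * real s" .
      qed
      also have "\<dots> = max 0 (CC I) * (\<epsilon> * real s)" using C0 by simp
      finally have mb: "measure lebesgue (D I - (+) (- h) ` D I) \<le> max 0 (CC I) * (\<epsilon> * real s)" .
      have "D I - (+) (- h) ` D I \<in> sets lebesgue" using Dlm Dtr by auto
      with mb show ?thesis unfolding h_def by simp
    qed
    define U where "U = (\<Union>I\<in>Pow {1..s}. D I - (+) (- (\<epsilon> *\<^sub>R w I)) ` D I)"
    have Usets: "U \<in> sets lebesgue" unfolding U_def using piece by (intro sets.finite_UN) auto
    have UO: "U \<subseteq> \<Omega>" unfolding U_def D_def by blast
    have Ulm: "U \<in> lmeasurable" by (rule fmeasurableI2[OF Olm UO Usets])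
    have Dlm: "\<Omega> - T_map s lam \<psi> \<epsilon> ` \<Omega> \<in> lmeasurable" using Olm TOm by (rule fmeasurable_Diff)
    have "measure lebesgue (\<Omega> - T_map s lam \<psi> \<epsilon> ` \<Omega>) \<le> measure lebesgue U"
      by (rule measure_mono_fmeasurable[OF _ meas Ulm]) (use cover in \<open>simp add: U_def\<close>)
    also have "\<dots> \<le> (\<Sum>I\<in>Pow {1..s}. measure lebesgue (D I - (+) (- (\<epsilon> *\<^sub>R w I)) ` D I))"
      unfolding U_def using piece by (intro measure_UNION_le) auto
    also have "\<dots> \<le> (\<Sum>I\<in>Pow {1..s}. max 0 (CC I) * (\<epsilon> * real s))"
      using piece by (intro sum_mono) auto
    also have "\<dots> = \<epsilon> * (real s * (\<Sum>I\<in>Pow {1..s}. max 0 (CC I)))"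
      by (simp add: sum_distrib_left mult_ac)
    also have "\<dots> \<le> A5 * \<epsilon>" using e0 unfolding A5_def by (simp add: algebra_simps)
    finally have mle: "measure lebesgue (\<Omega> - T_map s lam \<psi> \<epsilon> ` \<Omega>) \<le> A5 * \<epsilon>" .
    show "emeasure lebesgue (\<Omega> - T_map s lam \<psi> \<epsilon> ` \<Omega>) \<le> ennreal (A5 * \<epsilon>)"
      using mle by (simp add: emeasure_eq_measure2[OF Dlm] ennreal_leI)
  qed
qed

end
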